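(* Let $\mathfrak{A}$, $A$, $B$ be $C^*$-algebras, where $A$ and $B$ are $\mathfrak{A}$-bimodules with compatible actions. Let $\gamma$ be a $C^*$-norm on the algebraic tensor product $A\odot B$, let $A\otimes_\gamma B$ be the completion of $A\odot B$ with respect to $\gamma$, and let $I_\gamma$ be the closure in $A\otimes_\gamma B$ of the ideal $I=I_{A,B}$. Then there is an isometric isomorphism $$(A\otimes_\gamma B)/I_\gamma\simeq A\otimes_{\mathfrak{A},\gamma}B,$$ where $A\otimes_{\mathfrak{A},\gamma}B$ is the completion of $A\odot_{\mathfrak{A}}B=(A\odot B)/I$ with respect to the quotient norm $\|x+I\|_\gamma:=\inf_{i\in I}\|x+i\|_\gamma$.
   Context: An $\mathfrak{A}$-bimodule with compatible actions is a $C^*$-algebra $A$ with maps $\mathfrak{A}\times A\to A$, $(\alpha,a)\mapsto\alpha\cdot a$ and $A\times\mathfrak{A}\to A$, $(a,\alpha)\mapsto a\cdot\alpha$, which are bilinear, satisfy $\|a\cdot\alpha\|,\|\alpha\cdot a\|\le k\|a\|\|\alpha\|$ for some $k>0$, and satisfy $\alpha\cdot(ab)=(\alpha\cdot a)b$, $(ab)\cdot\alpha=a(b\cdot\alpha)$, $(\alpha\cdot a)^*=a^*\cdot\alpha^*$, $(a\cdot\alpha)^*=\alpha^*\cdot a^*$ for all $\alpha\in\mathfrak{A}$, $a,b\in A$. $I_{A,B}$ denotes the ideal of $A\odot B$ generated by all elements $a\cdot\alpha\otimes b-a\otimes\alpha\cdot b$ ($\alpha\in\mathfrak{A}$, $a\in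 A$, $b\in B$), and $A\odot_{\mathfrak{A}}B:=(A\odot B)/I_{A,B}$. *)

theory Defs
  imports Complex_Main
begin

text \<open>A C*-algebra is modelled by a type of class real_normed_algebra and banach
  (non-unital complete normed algebra) together with an explicit complex scalar
  multiplication sm (extending scaleR) and an involution st satisfying the C*-identity.\<close>

definition cstar_alg :: "(complex \<Rightarrow> 'a::{real_normed_algebra,banach} \<Rightarrow> 'a) \<Rightarrow> ('a \<Rightarrow> 'a) \<Rightarrow> bool" where
  "cstar_alg sm st \<longleftrightarrow>
     (\<forall>c d x. sm c (sm d x) = sm (c * d) x) \<and>
     (\<forall>x. sm 1 x = x) \<and>
     (\<forall>c x y. sm c (x + y) = sm c x + sm c y) \<and>
     (\<forall>c d x. sm (c + d) x = sm c x + sm d x) \<and>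
     (\<forall>r x. sm (complex_of_real r) x = scaleR r x) \<and>
     (\<forall>c x. norm (sm c x) = cmod c * norm x) \<and>
     (\<forall>c x y. sm c (x * y) = sm c x * y \<and> sm c (x * y) = x * sm c y) \<and>
     (\<forall>x. st (st x) = x) \<and>
     (\<forall>x y. st (x + y) = st x + st y) \<and>
     (\<forall>c x. st (sm c x) = sm (cnj c) (st x)) \<and>
     (\<forall>x y. st (x * y) = st y * st x) \<and>
     (\<forall>x. norm (st x * x) = norm x ^ 2)"

definition compat_bimod ::
  "(complex \<Rightarrow> 'u::{real_normed_algebra,banach} \<Rightarrow> 'u) \<Rightarrow> ('u \<Rightarrow> 'u) \<Rightarrow>
   (complex \<Rightarrow> 'a::{real_normed_algebra,banach} \<Rightarrow> 'a) \<Rightarrow> ('a \<Rightarrow> 'a) \<Rightarrow>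
   ('u \<Rightarrow> 'a \<Rightarrow> 'a) \<Rightarrow> ('a \<Rightarrow> 'u \<Rightarrow> 'a) \<Rightarrow> bool" where
  "compat_bimod su stu sa sta la ra \<longleftrightarrow>
     \<comment> \<open>bilinearity\<close>
     (\<forall>\<alpha> \<beta> a. la (\<alpha> + \<beta>) a = la \<alpha> a + la \<beta> a) \<and>
     (\<forall>\<alpha> a b. la \<alpha> (a + b) = la \<alpha> a + la \<alpha> b) \<and>
     (\<forall>c \<alpha> a. la (su c \<alpha>) a = sa c (la \<alpha> a)) \<and>
     (\<forall>c \<alpha> a. la \<alpha> (sa c a) = sa c (la \<alpha> a)) \<and>
     (\<forall>\<alpha> \<beta> a. ra a (\<alpha> + \<beta>) = ra a \<alpha> + ra a \<beta>) \<and>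
     (\<forall>\<alpha> a b. ra (a + b) \<alpha> = ra a \<alpha> + ra b \<alpha>) \<and>
     (\<forall>c \<alpha> a. ra a (su c \<alpha>) = sa c (ra a \<alpha>)) \<and>
     (\<forall>c \<alpha> a. ra (sa c a) \<alpha> = sa c (ra a \<alpha>)) \<and>
     \<comment> \<open>bimodule axioms\<close>
     (\<forall>\<alpha> \<beta> a. la (\<alpha> * \<beta>) a = la \<alpha> (la \<beta> a)) \<and>
     (\<forall>\<alpha> \<beta> a. ra a (\<alpha> * \<beta>) = ra (ra a \<alpha>) \<beta>) \<and>
     (\<forall>\<alpha> \<beta> a. la \<alpha> (ra a \<beta>) = ra (la \<alpha> a) \<beta>) \<and>
     \<comment> \<open>boundedness\<close>
     (\<exists>k>0. \<forall>\<alpha> a. norm (ra a \<alpha>) \<le> k * norm a * norm \<alpha> \<and> norm (la \<alpha> a) \<le> k * norm a * norm \<alpha>) \<and>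
     \<comment> \<open>compatibility\<close>
     (\<forall>\<alpha> a b. la \<alpha> (a * b) = la \<alpha> a * b) \<and>
     (\<forall>\<alpha> a b. ra (a * b) \<alpha> = a * ra b \<alpha>) \<and>
     (\<forall>\<alpha> a. sta (la \<alpha> a) = ra (sta a) (stu \<alpha>)) \<and>
     (\<forall>\<alpha> a. sta (ra a \<alpha>) = la (stu \<alpha>) (sta a))"

text \<open>Elements of A \<odot> B are represented by finitely supported formal complex
  combinations of pairs (a,b), i.e. functions 'a \<times> 'b \<Rightarrow> complex with finite support,
  modulo the subspace tker generated by the bilinearity relations.\<close>

definition fin :: "('a \<times> 'b \<Rightarrow> complex) set" where
  "fin = {f. finite {p. f p \<noteq> 0}}"

definition tzero :: "'a \<times> 'b \<Rightarrow> complex" where "tzero = (\<lambda>p. 0)"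
definition tadd :: "('a \<times> 'b \<Rightarrow> complex) \<Rightarrow> ('a \<times> 'b \<Rightarrow> complex) \<Rightarrow> ('a \<times> 'b \<Rightarrow> complex)" where
  "tadd f g = (\<lambda>p. f p + g p)"
definition tdiff :: "('a \<times> 'b \<Rightarrow> complex) \<Rightarrow> ('a \<times> 'b \<Rightarrow> complex) \<Rightarrow> ('a \<times> 'b \<Rightarrow> complex)" where
  "tdiff f g = (\<lambda>p. f p - g p)"
definition tsmult :: "complex \<Rightarrow> ('a \<times> 'b \<Rightarrow> complex) \<Rightarrow> ('a \<times> 'b \<Rightarrow> complex)" where
  "tsmult c f = (\<lambda>p. c * f p)"
definition etens :: "'a \<Rightarrow> 'b \<Rightarrow> ('a \<times> 'b \<Rightarrow> complex)" where
  "etens a b = (\<lambda>p. if p = (a, b) then 1 else 0)"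

text \<open>Product: (a \<otimes> b)(a' \<otimes> b') = aa' \<otimes> bb', extended bilinearly.\<close>
definition tmult :: "('a::times \<times> 'b::times \<Rightarrow> complex) \<Rightarrow> ('a \<times> 'b \<Rightarrow> complex) \<Rightarrow> ('a \<times> 'b \<Rightarrow> complex)" where
  "tmult f g = (\<lambda>p. \<Sum>x\<in>{q. f q \<noteq> 0}. \<Sum>y\<in>{q. g q \<noteq> 0}.
      if (fst x * fst y, snd x * snd y) = p then f x * g y else 0)"

text \<open>Involution: (c a \<otimes> b)^* = cnj c a^* \<otimes> b^*.\<close>
definition tstar :: "('a \<Rightarrow> 'a) \<Rightarrow> ('b \<Rightarrow> 'b) \<Rightarrow> ('a \<times> 'b \<Rightarrow> complex) \<Rightarrow> ('a \<times> 'b \<Rightarrow> complex)" where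
  "tstar sta stb f = (\<lambda>(a, b). cnj (f (sta a, stb b)))"

inductive_set tspan :: "('a \<times> 'b \<Rightarrow> complex) set \<Rightarrow> ('a \<times> 'b \<Rightarrow> complex) set" for S where
  tspan_zero: "tzero \<in> tspan S"
| tspan_base: "x \<in> S \<Longrightarrow> x \<in> tspan S"
| tspan_add: "x \<in> tspan S \<Longrightarrow> y \<in> tspan S \<Longrightarrow> tadd x y \<in> tspan S"
| tspan_smult: "x \<in> tspan S \<Longrightarrow> tsmult c x \<in> tspan S"

definition tker :: "(complex \<Rightarrow> 'a::plus \<Rightarrow> 'a) \<Rightarrow> (complex \<Rightarrow> 'b::plus \<Rightarrow> 'b) \<Rightarrow> ('a \<times> 'b \<Rightarrow> complex) set" where
  "tker sa sb = tspan
     ({tdiff (etens (a + a') b) (tadd (etens a b) (etens a' b)) | a a' b. True} \<union>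
      {tdiff (etens a (b + b')) (tadd (etens a b) (etens a b')) | a b b'. True} \<union>
      {tdiff (etens (sa c a) b) (tsmult c (etens a b)) | c a b. True} \<union>
      {tdiff (etens a (sb c b)) (tsmult c (etens a b)) | c a b. True})"

text \<open>Two-sided ideal generated by G in the algebra A \<odot> B (lifted to representatives:
  it contains the kernel N).\<close>
inductive_set gen_ideal :: "('a::times \<times> 'b::times \<Rightarrow> complex) set \<Rightarrow> ('a \<times> 'b \<Rightarrow> complex) set \<Rightarrow> ('a \<times> 'b \<Rightarrow> complex) set"
  for N G where
  gi_ker: "x \<in> N \<Longrightarrow> x \<in> gen_ideal N G"
| gi_gen: "x \<in> G \<Longrightarrow> x \<in> gen_ideal N G"
| gi_add: "x \<in> gen_ideal N G \<Longrightarrow> y \<in> gen_ideal N G \<Longrightarrow> tadd x y \<in> gen_ideal N G"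
| gi_smult: "x \<in> gen_ideal N G \<Longrightarrow> tsmult c x \<in> gen_ideal N G"
| gi_lmult: "x \<in> gen_ideal N G \<Longrightarrow> y \<in> fin \<Longrightarrow> tmult y x \<in> gen_ideal N G"
| gi_rmult: "x \<in> gen_ideal N G \<Longrightarrow> y \<in> fin \<Longrightarrow> tmult x y \<in> gen_ideal N G"

definition I_AB :: "(complex \<Rightarrow> 'a::{plus,times} \<Rightarrow> 'a) \<Rightarrow> (complex \<Rightarrow> 'b::{plus,times} \<Rightarrow> 'b) \<Rightarrow>
    ('a \<Rightarrow> 'u \<Rightarrow> 'a) \<Rightarrow> ('u \<Rightarrow> 'b \<Rightarrow> 'b) \<Rightarrow> ('a \<times> 'b \<Rightarrow> complex) set" where
  "I_AB sa sb raA laB = gen_ideal (tker sa sb)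
     {tdiff (etens (raA a \<alpha>) b) (etens a (laB \<alpha> b)) | a \<alpha> b. True}"

text \<open>A C*-norm on A \<odot> B, given on representatives: it vanishes exactly on the kernel.\<close>
definition cstar_norm :: "(complex \<Rightarrow> 'a::{plus,times} \<Rightarrow> 'a) \<Rightarrow> (complex \<Rightarrow> 'b::{plus,times} \<Rightarrow> 'b) \<Rightarrow>
    ('a \<Rightarrow> 'a) \<Rightarrow> ('b \<Rightarrow> 'b) \<Rightarrow> (('a \<times> 'b \<Rightarrow> complex) \<Rightarrow> real) \<Rightarrow> bool" where
  "cstar_norm sa sb sta stb \<gamma> \<longleftrightarrow>
     (\<forall>x\<in>fin. \<gamma> x \<ge> 0 \<and> (\<gamma> x = 0 \<longleftrightarrow> x \<in> tker sa sb)) \<and>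
     (\<forall>x\<in>fin. \<forall>y\<in>fin. \<gamma> (tadd x y) \<le> \<gamma> x + \<gamma> y) \<and>
     (\<forall>c. \<forall>x\<in>fin. \<gamma> (tsmult c x) = cmod c * \<gamma> x) \<and>
     (\<forall>x\<in>fin. \<forall>y\<in>fin. \<gamma> (tmult x y) \<le> \<gamma> x * \<gamma> y) \<and>
     (\<forall>x\<in>fin. \<gamma> (tmult (tstar sta stb x) x) = \<gamma> x ^ 2)"

type_synonym ('a, 'b) tseq = "nat \<Rightarrow> ('a \<times> 'b \<Rightarrow> complex)"

definition pcauchy :: "(('a \<times> 'b \<Rightarrow> complex) \<Rightarrow> real) \<Rightarrow> ('a, 'b) tseq set" where
  "pcauchy p = {X. (\<forall>n. X n \<in> fin) \<and>
      (\<forall>e>0. \<exists>M. \<forall>m\<ge>M. \<forall>n\<ge>M. p (tdiff (X m) (X n)) < e)}"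

definition cnorm :: "(('a \<times> 'b \<Rightarrow> complex) \<Rightarrow> real) \<Rightarrow> ('a, 'b) tseq \<Rightarrow> real" where
  "cnorm p X = lim (\<lambda>n. p (X n))"

definition sadd :: "('a, 'b) tseq \<Rightarrow> ('a, 'b) tseq \<Rightarrow> ('a, 'b) tseq" where
  "sadd X Y = (\<lambda>n. tadd (X n) (Y n))"
definition sdiff :: "('a, 'b) tseq \<Rightarrow> ('a, 'b) tseq \<Rightarrow> ('a, 'b) tseq" where
  "sdiff X Y = (\<lambda>n. tdiff (X n) (Y n))"
definition ssmult :: "complex \<Rightarrow> ('a, 'b) tseq \<Rightarrow> ('a, 'b) tseq" where
  "ssmult c X = (\<lambda>n. tsmult c (X n))"
definition smult :: "('a::times, 'b::times) tseq \<Rightarrow> ('a, 'b) tseq \<Rightarrow> ('a, 'b) tseq" where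
  "smult X Y = (\<lambda>n. tmult (X n) (Y n))"
definition sstar :: "('a \<Rightarrow> 'a) \<Rightarrow> ('b \<Rightarrow> 'b) \<Rightarrow> ('a, 'b) tseq \<Rightarrow> ('a, 'b) tseq" where
  "sstar sta stb X = (\<lambda>n. tstar sta stb (X n))"

definition closure_ideal :: "(('a \<times> 'b \<Rightarrow> complex) \<Rightarrow> real) \<Rightarrow> ('a \<times> 'b \<Rightarrow> complex) set \<Rightarrow> ('a, 'b) tseq set" where
  "closure_ideal \<gamma> I = {X \<in> pcauchy \<gamma>. \<forall>e>0. \<exists>i\<in>I. cnorm \<gamma> (sdiff X (\<lambda>n. i)) < e}"

definition qnorm :: "(('a \<times> 'b \<Rightarrow> complex) \<Rightarrow> real) \<Rightarrow> ('a \<times> 'b \<Rightarrow> complex) set \<Rightarrow> ('a, 'b) tseq \<Rightarrow> real" where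
  "qnorm \<gamma> I X = Inf {cnorm \<gamma> (sdiff X Y) | Y. Y \<in> closure_ideal \<gamma> I}"

definition quot_seminorm :: "(('a \<times> 'b \<Rightarrow> complex) \<Rightarrow> real) \<Rightarrow> ('a \<times> 'b \<Rightarrow> complex) set \<Rightarrow> ('a \<times> 'b \<Rightarrow> complex) \<Rightarrow> real" where
  "quot_seminorm \<gamma> I x = Inf {\<gamma> (tadd x i) | i. i \<in> I}"

end

theory Submission
  imports Defs
begin


lemma fin_tzero[simp]: "tzero \<in> fin" by (simp add: fin_def tzero_def)
lemma fin_tadd[simp]: "x \<in> fin \<Longrightarrow> y \<in> fin \<Longrightarrow> tadd x y \<in> fin"
  unfolding fin_def tadd_def mem_Collect_eq
  by (rule finite_subset[of _ "{p. x p \<noteq> 0} \<union> {p. y p \<noteq> 0}"]) auto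
lemma fin_tsmult[simp]: "x \<in> fin \<Longrightarrow> tsmult c x \<in> fin"
  unfolding fin_def tsmult_def mem_Collect_eq
  by (rule finite_subset[of _ "{p. x p \<noteq> 0}"]) auto
lemma fin_tdiff[simp]: "x \<in> fin \<Longrightarrow> y \<in> fin \<Longrightarrow> tdiff x y \<in> fin"
  unfolding fin_def tdiff_def mem_Collect_eq
  by (rule finite_subset[of _ "{p. x p \<noteq> 0} \<union> {p. y p \<noteq> 0}"]) auto
lemma fin_etens[simp]: "etens a b \<in> fin"
  unfolding fin_def etens_def mem_Collect_eq
  by (rule finite_subset[of _ "{(a,b)}"]) auto
lemma fin_tmult[simp]: "tmult x y \<in> fin"
proof (cases "finite {q. x q \<noteq> 0} \<and> finite {q. y q \<noteq> 0}")
  case True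
  have "{p. tmult x y p \<noteq> 0} \<subseteq> (\<lambda>(u,v). (fst u * fst v, snd u * snd v)) ` ({q. x q \<noteq> 0} \<times> {q. y q \<noteq> 0})"
  proof
    fix p assume "p \<in> {p. tmult x y p \<noteq> 0}"
    then have "(\<Sum>u\<in>{q. x q \<noteq> 0}. \<Sum>v\<in>{q. y q \<noteq> 0}.
      if (fst u * fst v, snd u * snd v) = p then x u * y v else 0) \<noteq> 0" by (simp add: tmult_def)
    then obtain u where u: "u \<in> {q. x q \<noteq> 0}" and "(\<Sum>v\<in>{q. y q \<noteq> 0}.
      if (fst u * fst v, snd u * snd v) = p then x u * y v else 0) \<noteq> 0" by (rule sum.not_neutral_contains_not_neutral)
    from this(2) obtain v where v: "v \<in> {q. y q \<noteq> 0}" and "(if (fst u * fst v, snd u * snd v) = p then x u * y v else 0) \<noteq> 0"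
      by (rule sum.not_neutral_contains_not_neutral)
    then have "p = (fst u * fst v, snd u * snd v)" by (simp split: if_splits)
    with u v show "p \<in> (\<lambda>(u,v). (fst u * fst v, snd u * snd v)) ` ({q. x q \<noteq> 0} \<times> {q. y q \<noteq> 0})"
      by (intro image_eqI[of _ _ "(u,v)"]) auto
  qed
  then show ?thesis using True unfolding fin_def mem_Collect_eq by (meson finite_SigmaI finite_imageI finite_subset)
next
  case False
  then have "tmult x y = (\<lambda>p. 0)" using False by (cases "finite {q. x q \<noteq> 0}") (simp_all add: tmult_def fun_eq_iff)
  then show ?thesis by (simp add: fin_def)
qed

lemma tspan_fin: "x \<in> tspan S \<Longrightarrow> S \<subseteq> fin \<Longrightarrow> x \<in> fin"
  by (induction rule: tspan.induct) auto

lemma tker_fin: "tker sa sb \<subseteq> fin"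
  unfolding tker_def by (rule subsetI, erule tspan_fin) auto

lemma gen_ideal_fin: "x \<in> gen_ideal N G \<Longrightarrow> N \<subseteq> fin \<Longrightarrow> G \<subseteq> fin \<Longrightarrow> x \<in> fin"
  by (induction rule: gen_ideal.induct) auto

lemma I_fin: "I_AB sa sb raA laB \<subseteq> fin"
  unfolding I_AB_def by (rule subsetI, erule gen_ideal_fin) (use tker_fin in auto)

lemma tzero_tker: "tzero \<in> tker sa sb" unfolding tker_def by (rule tspan_zero)



locale qn =
  fixes g :: "('a \<times> 'b \<Rightarrow> complex) \<Rightarrow> real" and I :: "('a \<times> 'b \<Rightarrow> complex) set"
  assumes nn: "x \<in> fin \<Longrightarrow> 0 \<le> g x" and gz: "g tzero = 0"
   and tri: "x \<in> fin \<Longrightarrow> y \<in> fin \<Longrightarrow> g (tadd x y) \<le> g x + g y"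
   and sc: "x \<in> fin \<Longrightarrow> g (tsmult c x) = cmod c * g x"
   and Ifin: "I \<subseteq> fin" and Iz: "tzero \<in> I" and Iadd: "i \<in> I \<Longrightarrow> j \<in> I \<Longrightarrow> tadd i j \<in> I"
   and Ism: "i \<in> I \<Longrightarrow> tsmult c i \<in> I"
begin

abbreviation "q \<equiv> quot_seminorm g I"

lemma Ifin': "i \<in> I \<Longrightarrow> i \<in> fin" using Ifin by auto

lemma tdiff_self: "tdiff x x = tzero" by (simp add: tdiff_def tzero_def)

lemma g_sym: "x \<in> fin \<Longrightarrow> y \<in> fin \<Longrightarrow> g (tdiff x y) = g (tdiff y x)"
proof -
  assume "x \<in> fin" "y \<in> fin"
  have "tdiff y x = tsmult (-1) (tdiff x y)" by (simp add: tdiff_def tsmult_def)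
  then show ?thesis using sc[of "tdiff x y" "-1"] \<open>x \<in> fin\<close> \<open>y \<in> fin\<close> by simp
qed

lemma g_lip: "x \<in> fin \<Longrightarrow> y \<in> fin \<Longrightarrow> g x \<le> g y + g (tdiff x y)"
proof -
  assume "x \<in> fin" "y \<in> fin"
  have "x = tadd y (tdiff x y)" by (simp add: tdiff_def tadd_def)
  then show ?thesis using tri[of y "tdiff x y"] \<open>x \<in> fin\<close> \<open>y \<in> fin\<close> by simp
qed

lemma qset_ne: "{g (tadd x i) |i. i \<in> I} \<noteq> {}" using Iz by auto

lemma qset_bdd: "x \<in> fin \<Longrightarrow> bdd_below {g (tadd x i) |i. i \<in> I}"
  by (rule bdd_belowI[of _ 0]) (auto intro!: nn fin_tadd dest: Ifin')

lemma q_le: "x \<in> fin \<Longrightarrow> i \<in> I \<Longrightarrow> q x \<le> g (tadd x i)"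
  unfolding quot_seminorm_def by (rule cInf_lower) (auto intro: qset_bdd)

lemma q_nn: "x \<in> fin \<Longrightarrow> 0 \<le> q x"
  unfolding quot_seminorm_def by (rule cInf_greatest) (use qset_ne nn Ifin' in auto)

lemma q_le_g: "x \<in> fin \<Longrightarrow> q x \<le> g x"
proof -
  assume "x \<in> fin"
  have "tadd x tzero = x" by (simp add: tadd_def tzero_def)
  then show ?thesis using q_le[OF \<open>x \<in> fin\<close> Iz] by simp
qed

lemma q_zero: "q tzero = 0" using q_le_g[of tzero] q_nn[of tzero] gz by simp

lemma q_lt: "x \<in> fin \<Longrightarrow> q x < r \<Longrightarrow> \<exists>i\<in>I. g (tadd x i) < r"
  unfolding quot_seminorm_def using cInf_lessD[OF qset_ne] by blast

lemma q_lip: "x \<in> fin \<Longrightarrow> y \<in> fin \<Longrightarrow> q x \<le> q y + g (tdiff x y)"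
proof -
  assume x: "x \<in> fin" and y: "y \<in> fin"
  have "q x - g (tdiff x y) \<le> q y"
    unfolding quot_seminorm_def[of g I y]
  proof (rule cInf_greatest[OF qset_ne])
    fix s assume "s \<in> {g (tadd y i) |i. i \<in> I}"
    then obtain i where i: "i \<in> I" and s: "s = g (tadd y i)" by auto
    have "tadd x i = tadd (tadd y i) (tdiff x y)" by (simp add: tadd_def tdiff_def algebra_simps)
    then have "g (tadd x i) \<le> g (tadd y i) + g (tdiff x y)"
      using tri[of "tadd y i" "tdiff x y"] x y Ifin' i by simp
    then show "q x - g (tdiff x y) \<le> s" using q_le[OF x i] s by simp
  qed
  then show ?thesis by simp
qed

lemma q_addI: "x \<in> fin \<Longrightarrow> J \<in> I \<Longrightarrow> q (tadd x J) \<le> q x"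
proof -
  assume x: "x \<in> fin" and J: "J \<in> I"
  show ?thesis unfolding quot_seminorm_def[of g I x]
  proof (rule cInf_greatest[OF qset_ne])
    fix s assume "s \<in> {g (tadd x i) |i. i \<in> I}"
    then obtain i where i: "i \<in> I" and s: "s = g (tadd x i)" by auto
    have "tadd i (tsmult (-1) J) \<in> I" using i J Iadd Ism by blast
    moreover have "tadd (tadd x J) (tadd i (tsmult (-1) J)) = tadd x i"
      by (simp add: tadd_def tsmult_def)
    ultimately show "q (tadd x J) \<le> s" using q_le[of "tadd x J" "tadd i (tsmult (-1) J)"] x J Ifin' s
      by simp
  qed
qed

lemma conv_lip:
  assumes X: "X \<in> pcauchy g" and f: "\<And>x y. x \<in> fin \<Longrightarrow> y \<in> fin \<Longrightarrow> f x \<le> f y + g (tdiff x y)"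
  shows "(\<lambda>n. f (X n)) \<longlonglongrightarrow> lim (\<lambda>n. f (X n))"
proof -
  have fin: "\<And>n. X n \<in> fin" using X by (simp add: pcauchy_def)
  have "Cauchy (\<lambda>n. f (X n))"
    unfolding Cauchy_def
  proof (intro allI impI)
    fix e :: real assume "0 < e"
    then obtain M where M: "\<forall>m\<ge>M. \<forall>n\<ge>M. g (tdiff (X m) (X n)) < e"
      using X by (auto simp: pcauchy_def)
    show "\<exists>M. \<forall>m\<ge>M. \<forall>n\<ge>M. dist (f (X m)) (f (X n)) < e"
    proof (intro exI allI impI)
      fix m n assume "M \<le> m" "M \<le> n"
      then have "g (tdiff (X m) (X n)) < e" "g (tdiff (X n) (X m)) < e" using M by auto
      moreover have "f (X m) \<le> f (X n) + g (tdiff (X m) (X n))" "f (X n) \<le> f (X m) + g (tdiff (X n) (X m))"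
        using f fin by auto
      ultimately show "dist (f (X m)) (f (X n)) < e" by (simp add: dist_real_def abs_less_iff)
    qed
  qed
  then show ?thesis using Cauchy_convergent_iff convergent_LIMSEQ_iff by blast
qed

lemma conv_g: "X \<in> pcauchy g \<Longrightarrow> (\<lambda>n. g (X n)) \<longlonglongrightarrow> cnorm g X"
  unfolding cnorm_def by (rule conv_lip) (auto intro: g_lip)

lemma conv_q: "X \<in> pcauchy g \<Longrightarrow> (\<lambda>n. q (X n)) \<longlonglongrightarrow> cnorm q X"
  unfolding cnorm_def by (rule conv_lip) (auto intro: q_lip)

lemma pc_fin: "X \<in> pcauchy p \<Longrightarrow> X n \<in> fin" by (simp add: pcauchy_def)

lemma pc_const: "c \<in> fin \<Longrightarrow> (\<lambda>n. c) \<in> pcauchy g"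
  unfolding pcauchy_def by (auto simp: tdiff_self gz)

lemma pc_sdiff: assumes X: "X \<in> pcauchy g" and Y: "Y \<in> pcauchy g" shows "sdiff X Y \<in> pcauchy g"
  unfolding pcauchy_def mem_Collect_eq
proof (intro conjI allI impI)
  fix n show "sdiff X Y n \<in> fin" using X Y by (simp add: sdiff_def pc_fin)
next
  fix e :: real assume "0 < e"
  then have e2: "0 < e/2" by simp
  obtain M1 where M1: "\<forall>m\<ge>M1. \<forall>n\<ge>M1. g (tdiff (X m) (X n)) < e/2"
    using X e2 unfolding pcauchy_def by blast
  obtain M2 where M2: "\<forall>m\<ge>M2. \<forall>n\<ge>M2. g (tdiff (Y m) (Y n)) < e/2"
    using Y e2 unfolding pcauchy_def by blast
  show "\<exists>M. \<forall>m\<ge>M. \<forall>n\<ge>M. g (tdiff (sdiff X Y m) (sdiff X Y n)) < e"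
  proof (intro exI allI impI)
    fix m n assume "max M1 M2 \<le> m" "max M1 M2 \<le> n"
    then have a: "g (tdiff (X m) (X n)) < e/2" "g (tdiff (Y m) (Y n)) < e/2" using M1 M2 by auto
    have "tdiff (sdiff X Y m) (sdiff X Y n) = tadd (tdiff (X m) (X n)) (tsmult (-1) (tdiff (Y m) (Y n)))"
      by (simp add: tdiff_def sdiff_def tadd_def tsmult_def algebra_simps)
    then have "g (tdiff (sdiff X Y m) (sdiff X Y n)) \<le> g (tdiff (X m) (X n)) + g (tdiff (Y m) (Y n))"
      using tri sc X Y pc_fin by (metis fin_tdiff fin_tsmult mult_cancel_right1 norm_minus_cancel norm_one)
    then show "g (tdiff (sdiff X Y m) (sdiff X Y n)) < e" using a by simp
  qed
qed


lemma part2: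
  assumes X: "X \<in> pcauchy g"
  shows "cnorm q X = qnorm g I X"
proof -
  define L where "L = cnorm q X"
  have XL: "(\<lambda>n. q (X n)) \<longlonglongrightarrow> L" using conv_q[OF X] L_def by simp
  define S where "S = {cnorm g (sdiff X Y) | Y. Y \<in> closure_ideal g I}"
  have lower: "L \<le> s" if "s \<in> S" for s
  proof -
    obtain Y where Y: "Y \<in> closure_ideal g I" and s: "s = cnorm g (sdiff X Y)" using \<open>s \<in> S\<close> S_def by auto
    have Yc: "Y \<in> pcauchy g" using Y by (simp add: closure_ideal_def)
    have D: "(\<lambda>n. g (sdiff X Y n)) \<longlonglongrightarrow> s" using conv_g[OF pc_sdiff[OF X Yc]] s by simp
    have "L < s + e" if "e > 0" for e
    proof -
      obtain i where i: "i \<in> I" and ie: "cnorm g (sdiff Y (\<lambda>n. i)) < e"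
        using Y \<open>e > 0\<close> by (auto simp: closure_ideal_def)
      have E: "(\<lambda>n. g (sdiff Y (\<lambda>n. i) n)) \<longlonglongrightarrow> cnorm g (sdiff Y (\<lambda>n. i))"
        using conv_g[OF pc_sdiff[OF Yc pc_const[OF Ifin'[OF i]]]] .
      have "q (X n) \<le> g (sdiff X Y n) + g (sdiff Y (\<lambda>n. i) n)" for n
      proof -
        have "tsmult (-1) i \<in> I" using Ism i by blast
        then have "q (X n) \<le> g (tadd (X n) (tsmult (-1) i))" using q_le pc_fin[OF X] by blast
        also have "tadd (X n) (tsmult (-1) i) = tadd (sdiff X Y n) (sdiff Y (\<lambda>n. i) n)"
          by (simp add: tadd_def tsmult_def sdiff_def tdiff_def)
        also have "g \<dots> \<le> g (sdiff X Y n) + g (sdiff Y (\<lambda>n. i) n)"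
          by (rule tri) (use X Yc Ifin' i in \<open>auto simp: sdiff_def pc_fin\<close>)
        finally show ?thesis .
      qed
      then have "L \<le> s + cnorm g (sdiff Y (\<lambda>n. i))"
        using LIMSEQ_le[OF XL tendsto_add[OF D E]] by auto
      then show ?thesis using ie by simp
    qed
    then show ?thesis by (metis add.right_neutral dual_order.strict_implies_order less_add_same_cancel1 linorder_not_less field_le_epsilon)
  qed
  have Sne: "S \<noteq> {}"
  proof -
    have "(\<lambda>n. tzero) \<in> closure_ideal g I"
      unfolding closure_ideal_def using pc_const[OF fin_tzero] Iz
      by (auto intro!: bexI[of _ tzero] simp: sdiff_def tdiff_self cnorm_def gz)
    then show ?thesis unfolding S_def by blast
  qed
  have ge: "L \<le> Inf S" by (rule cInf_greatest[OF Sne lower])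
  have le: "Inf S \<le> L + 3 * e" if "e > 0" for e
  proof -
    obtain N1 where N1: "\<forall>n\<ge>N1. dist (q (X n)) L < e" using XL \<open>e > 0\<close> unfolding lim_sequentially by blast
    obtain N2 where N2: "\<forall>m\<ge>N2. \<forall>n\<ge>N2. g (tdiff (X m) (X n)) < e" using X \<open>e > 0\<close> by (auto simp: pcauchy_def)
    define N where "N = max N1 N2"
    have "q (X N) < L + e" using N1[rule_format, of N] N_def by (auto simp: dist_real_def)
    then obtain i where i: "i \<in> I" and gi: "g (tadd (X N) i) < L + e" using q_lt pc_fin[OF X] by blast
    define Y where "Y = (\<lambda>n::nat. tsmult (-1) i)"
    have Ycl: "Y \<in> closure_ideal g I"
    proof -
      have "tsmult (-1) i \<in> I" using Ism i by blast
      then show ?thesis unfolding closure_ideal_def Y_def using pc_const Ifin'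
        by (auto intro!: bexI[of _ "tsmult (-1) i"] simp: sdiff_def tdiff_self cnorm_def gz)
    qed
    have Yc: "Y \<in> pcauchy g" using Ycl by (simp add: closure_ideal_def)
    have D: "(\<lambda>n. g (sdiff X Y n)) \<longlonglongrightarrow> cnorm g (sdiff X Y)" using conv_g[OF pc_sdiff[OF X Yc]] .
    have "g (sdiff X Y n) \<le> L + 2 * e" if "n \<ge> N" for n
    proof -
      have "sdiff X Y n = tadd (tadd (X N) i) (tdiff (X n) (X N))"
        by (simp add: sdiff_def Y_def tadd_def tdiff_def tsmult_def algebra_simps)
      then have "g (sdiff X Y n) \<le> g (tadd (X N) i) + g (tdiff (X n) (X N))"
        using tri pc_fin[OF X] Ifin' i by simp
      moreover have "g (tdiff (X n) (X N)) < e" using N2 N_def that by auto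
      ultimately show ?thesis using gi by simp
    qed
    then have "cnorm g (sdiff X Y) \<le> L + 2 * e" using LIMSEQ_le_const2[OF D] by blast
    moreover have "cnorm g (sdiff X Y) \<in> S" using Ycl S_def by blast
    moreover have "bdd_below S" using lower by (auto simp: bdd_below_def)
    ultimately have "Inf S \<le> L + 2 * e" using cInf_lower order_trans by blast
    then show ?thesis using \<open>e > 0\<close> by simp
  qed
  have "Inf S \<le> L"
  proof (rule field_le_epsilon)
    fix e :: real assume "0 < e"
    then show "Inf S \<le> L + e" using le[of "e/3"] by simp
  qed
  then show ?thesis using ge unfolding qnorm_def S_def L_def by simp
qed


lemma surj_part:
  assumes Z: "Z \<in> pcauchy q"
  shows "\<exists>X\<in>pcauchy g. cnorm q (sdiff X Z) = 0"
proof -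
  have Zf: "\<And>n. Z n \<in> fin" using Z by (simp add: pcauchy_def)
  have "\<forall>k. \<exists>M. \<forall>m\<ge>M. \<forall>n\<ge>M. q (tdiff (Z m) (Z n)) < (1/2::real)^k"
    using Z unfolding pcauchy_def by auto
  then obtain M where M: "\<And>k m n. m \<ge> M k \<Longrightarrow> n \<ge> M k \<Longrightarrow> q (tdiff (Z m) (Z n)) < (1/2::real)^k"
    by metis
  define nn where "nn k = k + (\<Sum>l\<le>k. M l)" for k
  have nnM: "M k \<le> nn k" for k
    unfolding nn_def using member_le_sum[of k "{..k}" M] by simp
  have nnk: "k \<le> nn k" for k unfolding nn_def by simp
  have nnmono: "nn k \<le> nn (Suc k)" for k unfolding nn_def by simp
  have "\<forall>k. \<exists>i\<in>I. g (tadd (tdiff (Z (nn (Suc k))) (Z (nn k))) i) < (1/2::real)^k"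
  proof
    fix k
    have "q (tdiff (Z (nn (Suc k))) (Z (nn k))) < (1/2::real)^k"
      using M[of k] nnM[of k] nnM[of "Suc k"] nnmono[of k] by auto
    then show "\<exists>i\<in>I. g (tadd (tdiff (Z (nn (Suc k))) (Z (nn k))) i) < (1/2::real)^k"
      using q_lt Zf by simp
  qed
  then obtain i where iI: "\<And>k. i k \<in> I"
    and ig: "\<And>k. g (tadd (tdiff (Z (nn (Suc k))) (Z (nn k))) (i k)) < (1/2::real)^k"
    by metis
  define J where "J k = (\<lambda>p. \<Sum>l<k. i l p)" for k
  have J0: "J 0 = tzero" by (simp add: J_def tzero_def)
  have JS: "J (Suc k) = tadd (J k) (i k)" for k by (simp add: J_def tadd_def)
  have JI: "J k \<in> I" for k
    by (induction k) (use J0 JS Iz Iadd iI in auto)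
  define X where "X k = tadd (Z (nn k)) (J k)" for k
  have Xf: "X k \<in> fin" for k using X_def Zf JI Ifin' by simp
  have step: "g (tdiff (X (Suc k)) (X k)) < (1/2::real)^k" for k
  proof -
    have "tdiff (X (Suc k)) (X k) = tadd (tdiff (Z (nn (Suc k))) (Z (nn k))) (i k)"
      by (simp add: X_def JS tdiff_def tadd_def algebra_simps)
    then show ?thesis using ig by simp
  qed
  have bound: "g (tdiff (X m) (X n)) \<le> 2 * (1/2::real)^n - 2 * (1/2)^m" if "n \<le> m" for m n
    using that
  proof (induction m rule: dec_induct)
    case base
    then show ?case by (simp add: tdiff_self gz)
  next
    case (step m)
    have "tdiff (X (Suc m)) (X n) = tadd (tdiff (X (Suc m)) (X m)) (tdiff (X m) (X n))"
      by (simp add: tdiff_def tadd_def)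
    then have "g (tdiff (X (Suc m)) (X n)) \<le> g (tdiff (X (Suc m)) (X m)) + g (tdiff (X m) (X n))"
      using tri Xf by simp
    then show ?case using step.IH \<open>g (tdiff (X (Suc m)) (X m)) < (1/2)^m\<close> by simp
  qed
  have bound2: "g (tdiff (X m) (X n)) \<le> 2 * (1/2::real)^N" if "N \<le> m" "N \<le> n" for m n N
  proof (cases "n \<le> m")
    case True
    then have "g (tdiff (X m) (X n)) \<le> 2 * (1/2::real)^n" using bound[OF True] zero_le_power[of "1/2::real" m] by linarith
    also have "\<dots> \<le> 2 * (1/2)^N" using that by (simp add: power_decreasing)
    finally show ?thesis .
  next
    case False
    then have "g (tdiff (X n) (X m)) \<le> 2 * (1/2::real)^m" using bound[of m n] zero_le_power[of "1/2::real" n] by linarith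
    also have "\<dots> \<le> 2 * (1/2)^N" using that by (simp add: power_decreasing)
    finally show ?thesis using g_sym Xf by simp
  qed
  have Xc: "X \<in> pcauchy g"
    unfolding pcauchy_def mem_Collect_eq
  proof (intro conjI allI impI)
    fix n show "X n \<in> fin" by (rule Xf)
  next
    fix e :: real assume "0 < e"
    then obtain N where N: "(1/2::real)^N < e/2" using real_arch_pow_inv[of "e/2" "1/2"] by auto
    show "\<exists>M. \<forall>m\<ge>M. \<forall>n\<ge>M. g (tdiff (X m) (X n)) < e"
      using bound2[of N] N by (intro exI[of _ N]) force
  qed
  have "(\<lambda>k. q (sdiff X Z k)) \<longlonglongrightarrow> 0"
    unfolding lim_sequentially
  proof (intro allI impI)
    fix r :: real assume "0 < r"
    then obtain K where K: "\<forall>m\<ge>K. \<forall>n\<ge>K. q (tdiff (Z m) (Z n)) < r"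
      using Z unfolding pcauchy_def by blast
    show "\<exists>no. \<forall>n\<ge>no. dist (q (sdiff X Z n)) 0 < r"
    proof (intro exI allI impI)
      fix k assume "K \<le> k"
      have "sdiff X Z k = tadd (tdiff (Z (nn k)) (Z k)) (J k)"
        by (simp add: sdiff_def X_def tdiff_def tadd_def algebra_simps)
      then have "q (sdiff X Z k) \<le> q (tdiff (Z (nn k)) (Z k))"
        using q_addI JI Zf by simp
      moreover have "q (tdiff (Z (nn k)) (Z k)) < r" using K \<open>K \<le> k\<close> nnk[of k] by auto
      moreover have "0 \<le> q (sdiff X Z k)" using q_nn Xf Zf by (simp add: sdiff_def)
      ultimately show "dist (q (sdiff X Z k)) 0 < r" by (simp add: dist_real_def)
    qed
  qed
  then have "cnorm q (sdiff X Z) = 0" unfolding cnorm_def by (rule limI)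
  then show ?thesis using Xc by blast
qed

end

lemma sdiff_self: "sdiff W W = (\<lambda>n. tzero)" by (simp add: sdiff_def tdiff_def tzero_def)

theorem proposition2p3:
  fixes su :: "complex \<Rightarrow> 'u::{real_normed_algebra,banach} \<Rightarrow> 'u" and stu :: "'u \<Rightarrow> 'u"
    and sa :: "complex \<Rightarrow> 'a::{real_normed_algebra,banach} \<Rightarrow> 'a" and sta :: "'a \<Rightarrow> 'a"
    and sb :: "complex \<Rightarrow> 'b::{real_normed_algebra,banach} \<Rightarrow> 'b" and stb :: "'b \<Rightarrow> 'b"
    and laA :: "'u \<Rightarrow> 'a \<Rightarrow> 'a" and raA :: "'a \<Rightarrow> 'u \<Rightarrow> 'a"
    and laB :: "'u \<Rightarrow> 'b \<Rightarrow> 'b" and raB :: "'b \<Rightarrow> 'u \<Rightarrow> 'b"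
    and \<gamma> :: "('a \<times> 'b \<Rightarrow> complex) \<Rightarrow> real"
  assumes "cstar_alg su stu" and "cstar_alg sa sta" and "cstar_alg sb stb"
    and "compat_bimod su stu sa sta laA raA"
    and "compat_bimod su stu sb stb laB raB"
    and "cstar_norm sa sb sta stb \<gamma>"
  defines "I \<equiv> I_AB sa sb raA laB"
  shows "\<exists>\<Phi>. (\<forall>X\<in>pcauchy \<gamma>. \<Phi> X \<in> pcauchy (quot_seminorm \<gamma> I)) \<and>
    (\<forall>X\<in>pcauchy \<gamma>. cnorm (quot_seminorm \<gamma> I) (\<Phi> X) = qnorm \<gamma> I X) \<and>
    (\<forall>X\<in>pcauchy \<gamma>. \<forall>Y\<in>pcauchy \<gamma>.
        cnorm (quot_seminorm \<gamma> I) (sdiff (\<Phi> (sadd X Y)) (sadd (\<Phi> X) (\<Phi> Y))) = 0) \<and>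
    (\<forall>c. \<forall>X\<in>pcauchy \<gamma>.
        cnorm (quot_seminorm \<gamma> I) (sdiff (\<Phi> (ssmult c X)) (ssmult c (\<Phi> X))) = 0) \<and>
    (\<forall>X\<in>pcauchy \<gamma>. \<forall>Y\<in>pcauchy \<gamma>.
        cnorm (quot_seminorm \<gamma> I) (sdiff (\<Phi> (smult X Y)) (smult (\<Phi> X) (\<Phi> Y))) = 0) \<and>
    (\<forall>X\<in>pcauchy \<gamma>.
        cnorm (quot_seminorm \<gamma> I) (sdiff (\<Phi> (sstar sta stb X)) (sstar sta stb (\<Phi> X))) = 0) \<and>
    (\<forall>Z\<in>pcauchy (quot_seminorm \<gamma> I). \<exists>X\<in>pcauchy \<gamma>.
        cnorm (quot_seminorm \<gamma> I) (sdiff (\<Phi> X) Z) = 0)"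
proof -
  have cn: "cstar_norm sa sb sta stb \<gamma>" by fact
  interpret Q: qn \<gamma> I
  proof
    fix x :: "'a \<times> 'b \<Rightarrow> complex" assume "x \<in> fin" then show "0 \<le> \<gamma> x"
      using cn by (simp add: cstar_norm_def)
  next
    show "\<gamma> tzero = 0" using cn tzero_tker[of sa sb] by (simp add: cstar_norm_def)
  next
    fix x y :: "'a \<times> 'b \<Rightarrow> complex" assume "x \<in> fin" "y \<in> fin"
    then show "\<gamma> (tadd x y) \<le> \<gamma> x + \<gamma> y" using cn by (simp add: cstar_norm_def)
  next
    fix x :: "'a \<times> 'b \<Rightarrow> complex" and c assume "x \<in> fin"
    then show "\<gamma> (tsmult c x) = cmod c * \<gamma> x" using cn by (simp add: cstar_norm_def)
  next
    show "I \<subseteq> fin" unfolding I_def by (rule I_fin)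
  next
    show "tzero \<in> I" unfolding I_def I_AB_def by (rule gi_ker[OF tzero_tker])
  next
    fix i j assume "i \<in> I" "j \<in> I" then show "tadd i j \<in> I" unfolding I_def I_AB_def by (rule gi_add)
  next
    fix i c assume "i \<in> I" then show "tsmult c i \<in> I" unfolding I_def I_AB_def by (rule gi_smult)
  qed
  have z: "cnorm (quot_seminorm \<gamma> I) (sdiff W W) = 0" for W
    by (simp add: sdiff_self cnorm_def Q.q_zero)
  have p1: "X \<in> pcauchy (quot_seminorm \<gamma> I)" if X: "X \<in> pcauchy \<gamma>" for X
    unfolding pcauchy_def mem_Collect_eq
  proof (intro conjI allI impI)
    fix n show "X n \<in> fin" using X by (simp add: pcauchy_def)
  next
    fix e :: real assume "0 < e"
    then obtain M where M: "\<forall>m\<ge>M. \<forall>n\<ge>M. \<gamma> (tdiff (X m) (X n)) < e" using X by (auto simp: pcauchy_def)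
    show "\<exists>M. \<forall>m\<ge>M. \<forall>n\<ge>M. quot_seminorm \<gamma> I (tdiff (X m) (X n)) < e"
      using M Q.q_le_g Q.pc_fin[OF X] by (meson fin_tdiff le_less_trans)
  qed
  show ?thesis
    apply (rule exI[of _ "\<lambda>X. X"])
    using p1 Q.part2 Q.surj_part z by simp
qed

end
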